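(* Let $R$ be a ring with identity and an involution $*$, and let $a\in R$. Then: (i) $a$ is right $(a^*,1)$-invertible if and only if $R=aa^*R$; and $a$ is left $(1,a^* )$-invertible if and only if $R=Ra^*a$; (ii) $a$ is left $(a,a^* )$-invertible if and only if $Ra=Ra^*a^2$; and $a$ is right $(a,a^* )$-invertible if and only if $a^*R=a^*a^2R$; (iii) $a$ is left $(a^*,a)$-invertible if and only if $Ra^*=Ra^2a^*$; and $a$ is right $(a^*,a)$-invertible if and only if $aR=a^2a^*R$.
   Context: An involution is a map $*:R\to R$ with $(x^* )^*=x$, $(xy)^*=y^*x^*$, $(x+y)^*=x^*+y^*$. For $x\in R$: $xR=\{xr:r\in R\}$, $Rx=\{rx:r\in R\}$. For $a,b,c\in R$, $a$ is left $(b,c)$-invertible if there is $y$ with $Ry\subseteq Rc$ and $yab=b$; right $(b,c)$-invertible if there is $y$ with $yR\subseteq bR$ and $cay=c$. *)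

theory Defs
  imports Main
begin

definition is_involution :: "('a::ring_1 \<Rightarrow> 'a) \<Rightarrow> bool" where
  "is_involution s \<longleftrightarrow> (\<forall>x. s (s x) = x) \<and> (\<forall>x y. s (x * y) = s y * s x)
     \<and> (\<forall>x y. s (x + y) = s x + s y)"

definition rideal :: "'a::ring_1 \<Rightarrow> 'a set" where
  "rideal x = {x * r | r. True}"

definition lideal :: "'a::ring_1 \<Rightarrow> 'a set" where
  "lideal x = {r * x | r. True}"

definition left_bc_inv :: "'a::ring_1 \<Rightarrow> 'a \<Rightarrow> 'a \<Rightarrow> bool" where
  "left_bc_inv b c a \<longleftrightarrow> (\<exists>y. lideal y \<subseteq> lideal c \<and> y * a * b = b)"

definition right_bc_inv :: "'a::ring_1 \<Rightarrow> 'a \<Rightarrow> 'a \<Rightarrow> bool" where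
  "right_bc_inv b c a \<longleftrightarrow> (\<exists>y. rideal y \<subseteq> rideal b \<and> c * a * y = c)"

end

theory Submission
  imports Defs
begin

lemma lsub: "lideal y \<subseteq> lideal (c::'a::ring_1) \<longleftrightarrow> (\<exists>r. y = r * c)"
proof
  assume "lideal y \<subseteq> lideal c"
  moreover have "y \<in> lideal y" unfolding lideal_def by (rule CollectI, rule exI[of _ 1], simp)
  ultimately show "\<exists>r. y = r * c" unfolding lideal_def by blast
next
  assume "\<exists>r. y = r * c"
  then show "lideal y \<subseteq> lideal c" unfolding lideal_def by (auto simp: mult.assoc[symmetric])
qed

lemma rsub: "rideal y \<subseteq> rideal (b::'a::ring_1) \<longleftrightarrow> (\<exists>r. y = b * r)"
proof
  assume "rideal y \<subseteq> rideal b"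
  moreover have "y \<in> rideal y" unfolding rideal_def by (rule CollectI, rule exI[of _ 1], simp)
  ultimately show "\<exists>r. y = b * r" unfolding rideal_def by blast
next
  assume "\<exists>r. y = b * r"
  then show "rideal y \<subseteq> rideal b" unfolding rideal_def by (auto simp: mult.assoc)
qed

lemma leq: "lideal (x::'a::ring_1) = lideal (z * x) \<longleftrightarrow> (\<exists>r. r * z * x = x)"
proof
  assume "lideal x = lideal (z * x)"
  hence "lideal x \<subseteq> lideal (z*x)" by simp
  then obtain r where "x = r * (z * x)" unfolding lsub by blast
  then show "\<exists>r. r * z * x = x" by (intro exI[of _ r]) (simp add: mult.assoc)
next
  assume "\<exists>r. r * z * x = x"
  then obtain r where "r * z * x = x" by blast
  hence "x = r * (z * x)" by (simp add: mult.assoc)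
  hence "lideal x \<subseteq> lideal (z*x)" unfolding lsub by blast
  moreover have "lideal (z*x) \<subseteq> lideal x" unfolding lsub by blast
  ultimately show "lideal x = lideal (z * x)" by blast
qed

lemma req: "rideal (x::'a::ring_1) = rideal (x * z) \<longleftrightarrow> (\<exists>r. x * z * r = x)"
proof
  assume "rideal x = rideal (x * z)"
  hence "rideal x \<subseteq> rideal (x*z)" by simp
  then obtain r where "x = x * z * r" unfolding rsub by blast
  then show "\<exists>r. x * z * r = x" by (intro exI[of _ r]) simp
next
  assume "\<exists>r. x * z * r = x"
  then obtain r where "x * z * r = x" by blast
  hence "rideal x \<subseteq> rideal (x*z)" unfolding rsub by (intro exI[of _ r]) simp
  moreover have "rideal (x*z) \<subseteq> rideal x" unfolding rsub by (intro exI[of _ z]) simp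
  ultimately show "rideal x = rideal (x * z)" by blast
qed

lemma runiv: "UNIV = rideal (x::'a::ring_1) \<longleftrightarrow> (\<exists>r. x * r = 1)"
proof
  assume "UNIV = rideal x"
  hence "1 \<in> rideal x" by simp
  thus "\<exists>r. x * r = 1" unfolding rideal_def by auto
next
  assume "\<exists>r. x * r = 1"
  then obtain r where r: "x * r = 1" by blast
  have "y \<in> rideal x" for y unfolding rideal_def
    by (rule CollectI, rule exI[of _ "r * y"]) (simp add: mult.assoc[symmetric] r)
  thus "UNIV = rideal x" by blast
qed

lemma luniv: "UNIV = lideal (x::'a::ring_1) \<longleftrightarrow> (\<exists>r. r * x = 1)"
proof
  assume "UNIV = lideal x"
  hence "1 \<in> lideal x" by simp
  thus "\<exists>r. r * x = 1" unfolding lideal_def by auto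
next
  assume "\<exists>r. r * x = 1"
  then obtain r where r: "r * x = 1" by blast
  have "y \<in> lideal x" for y unfolding lideal_def
    by (rule CollectI, rule exI[of _ "y * r"]) (simp add: mult.assoc r)
  thus "UNIV = lideal x" by blast
qed

theorem proposition2p19:
  fixes s :: "'a::ring_1 \<Rightarrow> 'a" and a :: 'a
  assumes "is_involution s"
  shows "(right_bc_inv (s a) 1 a \<longleftrightarrow> UNIV = rideal (a * s a))
       \<and> (left_bc_inv 1 (s a) a \<longleftrightarrow> UNIV = lideal (s a * a))
       \<and> (left_bc_inv a (s a) a \<longleftrightarrow> lideal a = lideal (s a * a ^ 2))
       \<and> (right_bc_inv a (s a) a \<longleftrightarrow> rideal (s a) = rideal (s a * a ^ 2))
       \<and> (left_bc_inv (s a) a a \<longleftrightarrow> lideal (s a) = lideal (a ^ 2 * s a))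
       \<and> (right_bc_inv (s a) a a \<longleftrightarrow> rideal a = rideal (a ^ 2 * s a))"
proof -
  have e1: "s a * a ^ 2 = (s a * a) * a" by (simp add: power2_eq_square mult.assoc)
  have e2: "a ^ 2 * s a = a * (a * s a)" by (simp add: power2_eq_square mult.assoc)
  have c1: "right_bc_inv (s a) 1 a \<longleftrightarrow> UNIV = rideal (a * s a)"
    unfolding right_bc_inv_def rsub runiv
    by (auto simp: mult.assoc)
  have c2: "left_bc_inv 1 (s a) a \<longleftrightarrow> UNIV = lideal (s a * a)"
    unfolding left_bc_inv_def lsub luniv
    by (auto simp: mult.assoc)
  have c3: "left_bc_inv a (s a) a \<longleftrightarrow> lideal a = lideal (s a * a ^ 2)"
    unfolding left_bc_inv_def lsub e1 leq
    by (auto simp: mult.assoc power2_eq_square)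
  have c4: "right_bc_inv a (s a) a \<longleftrightarrow> rideal (s a) = rideal (s a * a ^ 2)"
    unfolding right_bc_inv_def rsub req
    by (auto simp: mult.assoc power2_eq_square)
  have c5: "left_bc_inv (s a) a a \<longleftrightarrow> lideal (s a) = lideal (a ^ 2 * s a)"
    unfolding left_bc_inv_def lsub leq
    by (auto simp: mult.assoc power2_eq_square)
  have c6: "right_bc_inv (s a) a a \<longleftrightarrow> rideal a = rideal (a ^ 2 * s a)"
    unfolding right_bc_inv_def rsub e2 req
    by (auto simp: mult.assoc power2_eq_square)
  show ?thesis by (simp only: c1 c2 c3 c4 c5 c6)
qed

end
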